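(* Let $G=(V,E)$ be an undirected graph and $T\subseteq V$ a set of $k=|T|\geq 3$ terminals such that $G$ has a 2-node-connected subgraph containing $T$. Let $H^*=(V^*,E^* )$ be a 2-node-connected subgraph of $G$ containing $T$ with the minimum number of edges, and $\mathrm{OPT}=|E^*|$. Consider the algorithm described below, and assume that each call to the subroutines $\mathrm{CYC}$ and $\mathrm{PATH}$ returns a valid (minimum-size) subgraph whenever one exists. Let $H=(U,\hat F)$ be the output of the algorithm. Then $H$ is 2-node-connected, $T\subseteq U$, and $|\hat F|\leq |E^*|=\mathrm{OPT}$.
   Context: A graph is 2-node-connected if it has more than 2 nodes and deleting any single node leaves it connected. Subroutine $\mathrm{CYC}(G,X)$ returns the edge set of a simple cycle of $G$ containing all nodes of $X$ with the minimum number of edges, or reports an error if none exists. Subroutine $\mathrm{PATH}(G,X,s,t)$ returns the edge set of a simple $s$–$t$ path of $G$ containing all nodes of $X$ with the minimum number of edges, or reports an error if none exists. The algorithm: initialize $\hat F:=E$. For every $S\subseteq V$ with $|S|\leq 2k$, every $r\in\{1,\dots,k\}$, every ordered partition $(\tilde T_1,\dots,\tilde T_r)$ of $T\cup S$ into nonempty sets with $|\tilde T_1|\geq 2$, and every choice of node pairs $(s_i,t_i)$, $i=1,\dots,r-1$, with $s_i\neq t_i$ and $s_i,t_i\in\tilde T_1\cup\dots\cup\tilde T_i$: let $H$ be the union of $\mathrm{CYC}(G,\tilde T_1)$ and $\mathrm{PATH}(G,\tilde T_{i+1},s_i,t_i)$ for $i=1,\dots,r-1$; if any call reports an error, skip this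 choice; otherwise, if $|E(H)|<|\hat F|$, set $\hat F:=E(H)$. Output the subgraph with edge set $\hat F$ (and node set $U$ the nodes incident to it). *)

theory Defs
  imports Main
begin

definition graph :: "'a set \<Rightarrow> 'a set set \<Rightarrow> bool" where
  "graph V Eg \<longleftrightarrow> finite V \<and> (\<forall>e\<in>Eg. e \<subseteq> V \<and> card e = 2)"

definition subgraph :: "'a set \<Rightarrow> 'a set set \<Rightarrow> 'a set \<Rightarrow> 'a set set \<Rightarrow> bool" where
  "subgraph U F V Eg \<longleftrightarrow> U \<subseteq> V \<and> F \<subseteq> Eg \<and> (\<forall>e\<in>F. e \<subseteq> U)"

definition adj :: "'a set set \<Rightarrow> ('a \<times> 'a) set" where
  "adj F = {(u, v). {u, v} \<in> F}"

definition connected_graph :: "'a set \<Rightarrow> 'a set set \<Rightarrow> bool" where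
  "connected_graph U F \<longleftrightarrow>
     (\<forall>u\<in>U. \<forall>v\<in>U. (u, v) \<in> (adj {e\<in>F. e \<subseteq> U})\<^sup>*)"

definition two_node_connected :: "'a set \<Rightarrow> 'a set set \<Rightarrow> bool" where
  "two_node_connected U F \<longleftrightarrow> finite U \<and> card U > 2 \<and>
     (\<forall>x\<in>U. connected_graph (U - {x}) {e\<in>F. x \<notin> e})"

definition is_cycle :: "'a set set \<Rightarrow> 'a list \<Rightarrow> bool" where
  "is_cycle Eg vs \<longleftrightarrow> distinct vs \<and> length vs \<ge> 3 \<and>
     (\<forall>i<length vs. {vs ! i, vs ! ((i + 1) mod length vs)} \<in> Eg)"

definition cycle_edges :: "'a list \<Rightarrow> 'a set set" where
  "cycle_edges vs = {{vs ! i, vs ! ((i + 1) mod length vs)} | i. i < length vs}"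

definition is_path :: "'a set set \<Rightarrow> 'a list \<Rightarrow> 'a \<Rightarrow> 'a \<Rightarrow> bool" where
  "is_path Eg vs s t \<longleftrightarrow> distinct vs \<and> vs \<noteq> [] \<and> hd vs = s \<and> last vs = t \<and>
     (\<forall>i. i + 1 < length vs \<longrightarrow> {vs ! i, vs ! (i + 1)} \<in> Eg)"

definition path_edges :: "'a list \<Rightarrow> 'a set set" where
  "path_edges vs = {{vs ! i, vs ! (i + 1)} | i. i + 1 < length vs}"

text \<open>Specification of the subroutines CYC(G,-) and PATH(G,-,-,-) for a fixed graph:
  None = error; Some F = edge set of a minimum-size simple cycle / s-t path through X.\<close>
definition cyc_spec :: "'a set set \<Rightarrow> ('a set \<Rightarrow> 'a set set option) \<Rightarrow> bool" where
  "cyc_spec Eg CYC \<longleftrightarrow> (\<forall>X.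
     (CYC X = None \<longleftrightarrow> \<not> (\<exists>vs. is_cycle Eg vs \<and> X \<subseteq> set vs)) \<and>
     (\<forall>C. CYC X = Some C \<longrightarrow>
        (\<exists>vs. is_cycle Eg vs \<and> X \<subseteq> set vs \<and> C = cycle_edges vs \<and>
           (\<forall>ws. is_cycle Eg ws \<and> X \<subseteq> set ws \<longrightarrow> card C \<le> card (cycle_edges ws)))))"

definition path_spec :: "'a set set \<Rightarrow> ('a set \<Rightarrow> 'a \<Rightarrow> 'a \<Rightarrow> 'a set set option) \<Rightarrow> bool" where
  "path_spec Eg PATH \<longleftrightarrow> (\<forall>X s t.
     (PATH X s t = None \<longleftrightarrow> \<not> (\<exists>vs. is_path Eg vs s t \<and> X \<subseteq> set vs)) \<and>
     (\<forall>P. PATH X s t = Some P \<longrightarrow>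
        (\<exists>vs. is_path Eg vs s t \<and> X \<subseteq> set vs \<and> P = path_edges vs \<and>
           (\<forall>ws. is_path Eg ws s t \<and> X \<subseteq> set ws \<longrightarrow> card P \<le> card (path_edges ws)))))"

text \<open>A choice of the algorithm: (S, [T_1,...,T_r], [(s_1,t_1),...,(s_{r-1},t_{r-1})]).\<close>
definition choices :: "'a set \<Rightarrow> 'a set \<Rightarrow> ('a set \<times> 'a set list \<times> ('a \<times> 'a) list) set" where
  "choices V T = {(S, Ts, ps). S \<subseteq> V \<and> card S \<le> 2 * card T \<and>
      1 \<le> length Ts \<and> length Ts \<le> card T \<and>
      (\<forall>i<length Ts. Ts ! i \<noteq> {}) \<and>
      (\<forall>i<length Ts. \<forall>j<length Ts. i \<noteq> j \<longrightarrow> Ts ! i \<inter> Ts ! j = {}) \<and>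
      \<Union>(set Ts) = T \<union> S \<and> card (Ts ! 0) \<ge> 2 \<and>
      length ps = length Ts - 1 \<and>
      (\<forall>i<length ps. fst (ps ! i) \<noteq> snd (ps ! i) \<and>
          fst (ps ! i) \<in> \<Union>(set (take (i + 1) Ts)) \<and>
          snd (ps ! i) \<in> \<Union>(set (take (i + 1) Ts)))}"

definition candidate ::
  "('a set \<Rightarrow> 'a set set option) \<Rightarrow> ('a set \<Rightarrow> 'a \<Rightarrow> 'a \<Rightarrow> 'a set set option) \<Rightarrow>
   'a set \<times> 'a set list \<times> ('a \<times> 'a) list \<Rightarrow> 'a set set option" where
  "candidate CYC PATH ch = (case ch of (S, Ts, ps) \<Rightarrow>
     (case CYC (Ts ! 0) of
        None \<Rightarrow> None
      | Some C \<Rightarrow>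
          (if (\<forall>i<length ps. PATH (Ts ! (i + 1)) (fst (ps ! i)) (snd (ps ! i)) \<noteq> None)
           then Some (C \<union> \<Union>{the (PATH (Ts ! (i + 1)) (fst (ps ! i)) (snd (ps ! i))) | i. i < length ps})
           else None)))"

definition alg_step ::
  "('a set \<Rightarrow> 'a set set option) \<Rightarrow> ('a set \<Rightarrow> 'a \<Rightarrow> 'a \<Rightarrow> 'a set set option) \<Rightarrow>
   'a set \<times> 'a set list \<times> ('a \<times> 'a) list \<Rightarrow> 'a set set \<Rightarrow> 'a set set" where
  "alg_step CYC PATH ch F = (case candidate CYC PATH ch of
      None \<Rightarrow> F
    | Some H \<Rightarrow> (if card H < card F then H else F))"

text \<open>Output edge set of the algorithm when the choices are enumerated in the order given by the list.\<close>
definition alg_output ::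
  "'a set set \<Rightarrow> ('a set \<Rightarrow> 'a set set option) \<Rightarrow> ('a set \<Rightarrow> 'a \<Rightarrow> 'a \<Rightarrow> 'a set set option) \<Rightarrow>
   ('a set \<times> 'a set list \<times> ('a \<times> 'a) list) list \<Rightarrow> 'a set set" where
  "alg_output Eg CYC PATH order = fold (alg_step CYC PATH) order Eg"

end

theory Submission
  imports Defs
begin
fun wk :: "'a set set \<Rightarrow> 'a list \<Rightarrow> bool" where
  "wk F [] = True"
| "wk F [x] = True"
| "wk F (x # y # xs) = ({x, y} \<in> F \<and> wk F (y # xs))"

lemma wk_nth: "wk F xs \<longleftrightarrow> (\<forall>i. i + 1 < length xs \<longrightarrow> {xs ! i, xs ! (i + 1)} \<in> F)"
proof (induction F xs rule: wk.induct)
  case (3 F x y xs)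
  show ?case
  proof
    assume "wk F (x # y # xs)"
    then show "\<forall>i. i + 1 < length (x # y # xs) \<longrightarrow> {(x # y # xs) ! i, (x # y # xs) ! (i + 1)} \<in> F"
      using 3 by (auto simp: nth_Cons split: nat.splits)
  next
    assume h: "\<forall>i. i + 1 < length (x # y # xs) \<longrightarrow> {(x # y # xs) ! i, (x # y # xs) ! (i + 1)} \<in> F"
    have "{x,y} \<in> F" using h[rule_format, of 0] by simp
    moreover have "\<forall>i. i + 1 < length (y # xs) \<longrightarrow> {(y # xs) ! i, (y # xs) ! (i + 1)} \<in> F"
    proof (intro allI impI)
      fix i assume "i + 1 < length (y # xs)"
      then show "{(y # xs) ! i, (y # xs) ! (i + 1)} \<in> F" using h[rule_format, of "Suc i"] by simp
    qed
    ultimately show "wk F (x # y # xs)" using 3 by simp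
  qed
qed auto

lemma wk_append: "wk F (xs @ ys) \<longleftrightarrow> wk F xs \<and> wk F ys \<and> (xs \<noteq> [] \<and> ys \<noteq> [] \<longrightarrow> {last xs, hd ys} \<in> F)"
proof (induction xs)
  case Nil then show ?case by simp
next
  case (Cons x xs)
  then show ?case by (cases xs; cases ys) auto
qed

lemma wk_appendD: "wk F (xs @ ys) \<Longrightarrow> wk F xs \<and> wk F ys"
  by (simp add: wk_append)

lemma wk_join: "wk F (xs @ [y]) \<Longrightarrow> wk F (y # ys) \<Longrightarrow> wk F (xs @ y # ys)"
  by (cases xs rule: rev_cases) (auto simp: wk_append)

lemma wk_rev: "wk F (rev xs) \<longleftrightarrow> wk F xs"
proof (induction F xs rule: wk.induct)
  case (3 F x y xs)
  then show ?case by (auto simp: wk_append insert_commute)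
qed auto

lemma wk_mono: "F \<subseteq> F' \<Longrightarrow> wk F xs \<Longrightarrow> wk F' xs"
  by (induction F xs rule: wk.induct) auto

lemma wk_set: "wk F p \<Longrightarrow> 2 \<le> length p \<Longrightarrow> set p \<subseteq> \<Union>F"
proof (induction F p rule: wk.induct)
  case (3 F x y xs)
  then show ?case by (cases xs) auto
qed auto

definition adjrel :: "'a set set \<Rightarrow> ('a \<times> 'a) set" where "adjrel F = adj F"

lemma reach_walk:
  assumes "(u, v) \<in> (adj F)\<^sup>*"
  shows "\<exists>p. p \<noteq> [] \<and> hd p = u \<and> last p = v \<and> wk F p \<and> set p \<subseteq> insert u (\<Union>F)"
  using assms
proof (induction rule: rtrancl_induct)
  case base
  then show ?case by (intro exI[of _ "[u]"]) auto
next
  case (step y z)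
  then obtain p where p: "p \<noteq> []" "hd p = u" "last p = y" "wk F p" "set p \<subseteq> insert u (\<Union>F)" by blast
  have e: "{y, z} \<in> F" using step(2) by (simp add: adj_def)
  show ?case
    using p e by (intro exI[of _ "p @ [z]"]) (auto simp: wk_append)
qed

lemma walk_path:
  assumes "wk F p" "p \<noteq> []"
  shows "\<exists>q. q \<noteq> [] \<and> hd q = hd p \<and> last q = last p \<and> wk F q \<and> distinct q \<and> set q \<subseteq> set p"
  using assms
proof (induction "length p" arbitrary: p rule: less_induct)
  case less
  show ?case
  proof (cases "distinct p")
    case True
    then show ?thesis using less by blast
  next
    case False
    then obtain xs y ys zs where pe: "p = xs @ [y] @ ys @ [y] @ zs"
      using not_distinct_decomp by blast
    define p' where "p' = xs @ [y] @ zs"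
    have w0: "wk F ((xs @ [y] @ ys) @ (y # zs))" using less(2) unfolding pe by simp
    have w1: "wk F (xs @ [y])" using less(2) unfolding pe by (simp add: wk_append)
    have w2: "wk F (y # zs)" using w0 by (simp only: wk_append)
    have "wk F p'" unfolding p'_def using wk_join[OF w1 w2] by simp
    moreover have "length p' < length p" unfolding p'_def pe by simp
    moreover have "p' \<noteq> []" unfolding p'_def by simp
    ultimately obtain q where q: "q \<noteq> []" "hd q = hd p'" "last q = last p'" "wk F q" "distinct q" "set q \<subseteq> set p'"
      using less(1) by blast
    have "hd p' = hd p" unfolding p'_def pe by (cases xs) auto
    moreover have "last p' = last p" unfolding p'_def pe by (cases zs) auto
    moreover have "set p' \<subseteq> set p" unfolding p'_def pe by auto
    ultimately show ?thesis using q by auto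
  qed
qed

lemma reach_path:
  assumes "(u, v) \<in> (adj F)\<^sup>*"
  shows "\<exists>q. q \<noteq> [] \<and> hd q = u \<and> last q = v \<and> wk F q \<and> distinct q \<and> set q \<subseteq> insert u (\<Union>F)"
proof -
  obtain p where p: "p \<noteq> []" "hd p = u" "last p = v" "wk F p" "set p \<subseteq> insert u (\<Union>F)"
    using reach_walk[OF assms] by blast
  then show ?thesis using walk_path[OF p(4) p(1)] by (metis order_trans)
qed

lemma adj_mono: "A \<subseteq> B \<Longrightarrow> adj A \<subseteq> adj B"
  by (auto simp: adj_def)

lemma sym_adj: "sym (adj F)"
  unfolding sym_def adj_def by (simp add: insert_commute)

lemma three_elem:
  assumes "finite U" "card U > 2"
  shows "\<exists>z\<in>U. z \<noteq> u \<and> z \<noteq> v"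
proof (rule ccontr)
  assume "\<not> ?thesis"
  then have "U \<subseteq> {u, v}" by auto
  then have "card U \<le> card {u, v}" by (simp add: card_mono)
  also have "\<dots> \<le> 2" by (simp add: card_insert_le_m1)
  finally show False using assms by simp
qed

definition ear :: "'a set set \<Rightarrow> 'a set \<Rightarrow> 'a list \<Rightarrow> bool" where
  "ear F W p \<longleftrightarrow> wk F p \<and> distinct p \<and> 2 \<le> length p \<and> set p \<inter> W = {hd p, last p}"

lemma ear_rev: "ear F W p \<Longrightarrow> ear F W (rev p)"
  unfolding ear_def by (auto simp: wk_rev hd_rev last_rev)

locale hs =
  fixes Vs :: "'a set" and Es :: "'a set set"
  assumes tnc: "two_node_connected Vs Es" and sub: "\<Union>Es \<subseteq> Vs" and c2: "\<forall>e\<in>Es. card e = 2"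
begin

lemma tnc_parts: "finite Vs \<and> card Vs > 2 \<and> (\<forall>x\<in>Vs. connected_graph (Vs - {x}) {e\<in>Es. x \<notin> e})"
  by (rule tnc[unfolded two_node_connected_def])

lemma finV: "finite Vs" using tnc_parts by (rule conjunct1)
lemma cardV: "card Vs > 2" using tnc_parts by (elim conjE)
lemma connV: "x \<in> Vs \<Longrightarrow> u \<in> Vs - {x} \<Longrightarrow> v \<in> Vs - {x} \<Longrightarrow>
   (u, v) \<in> (adj {e\<in>{e\<in>Es. x \<notin> e}. e \<subseteq> Vs - {x}})\<^sup>*"
proof -
  assume a: "x \<in> Vs" "u \<in> Vs - {x}" "v \<in> Vs - {x}"
  have "connected_graph (Vs - {x}) {e\<in>Es. x \<notin> e}" using tnc_parts a(1) by (elim conjE) (rule bspec)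
  then show ?thesis unfolding connected_graph_def using a(2,3) by blast
qed

lemma conn_avoid:
  assumes "x \<in> Vs" "u \<in> Vs" "v \<in> Vs" "u \<noteq> x" "v \<noteq> x"
  shows "\<exists>q. q \<noteq> [] \<and> hd q = u \<and> last q = v \<and> wk Es q \<and> distinct q \<and> x \<notin> set q \<and> set q \<subseteq> Vs"
proof -
  let ?F = "{e\<in>{e\<in>Es. x \<notin> e}. e \<subseteq> Vs - {x}}"
  have r: "(u, v) \<in> (adj ?F)\<^sup>*"
    using connV assms by blast
  obtain q where q: "q \<noteq> []" "hd q = u" "last q = v" "wk ?F q" "distinct q" "set q \<subseteq> insert u (\<Union>?F)"
    using reach_path[OF r] by blast
  have "?F \<subseteq> Es" by auto
  then have "wk Es q" using wk_mono q(4) by blast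
  moreover have "\<Union>?F \<subseteq> Vs - {x}" by auto
  then have "set q \<subseteq> Vs - {x}" using q(6) assms by auto
  ultimately show ?thesis using q by blast
qed

lemma conn_all:
  assumes "u \<in> Vs" "v \<in> Vs"
  shows "\<exists>q. q \<noteq> [] \<and> hd q = u \<and> last q = v \<and> wk Es q \<and> distinct q \<and> set q \<subseteq> Vs"
proof -
  obtain z where z: "z \<in> Vs" "z \<noteq> u" "z \<noteq> v" using three_elem[OF finV cardV] by blast
  have "u \<noteq> z" "v \<noteq> z" using z by auto
  from conn_avoid[OF z(1) assms this] show ?thesis by blast
qed

lemma cross:
  assumes "wk F p" "p \<noteq> []" "hd p \<in> W" "last p \<notin> W"
  shows "\<exists>w v. w \<in> W \<and> v \<notin> W \<and> {w, v} \<in> F"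
  using assms
proof (induction F p rule: wk.induct)
  case (3 F x y xs)
  then show ?case by (cases "y \<in> W") auto
qed auto

lemma basic_ear:
  assumes W: "W \<subseteq> Vs" and ab: "a \<in> W" "b \<in> W" "a \<noteq> b" and y: "y \<in> Vs" "y \<notin> W"
  shows "\<exists>e v. ear Es W e \<and> v \<in> set e \<and> v \<notin> W"
proof -
  obtain p where p: "p \<noteq> []" "hd p = a" "last p = y" "wk Es p"
    using conn_all[of a y] ab W y by blast
  have hp: "hd p \<in> W" "last p \<notin> W" using p ab y by auto
  obtain w v where wv: "w \<in> W" "v \<notin> W" "{w, v} \<in> Es"
    using cross[OF p(4) p(1) hp] by blast
  have vV: "v \<in> Vs" using wv(3) sub by auto
  have wV: "w \<in> Vs" using wv(1) W by auto
  obtain w2 where w2: "w2 \<in> W" "w2 \<noteq> w" using ab by blast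
  have w2V: "w2 \<in> Vs" using w2 W by blast
  have vw: "v \<noteq> w" using wv by auto
  obtain q where q: "q \<noteq> []" "hd q = v" "last q = w2" "wk Es q" "distinct q" "w \<notin> set q"
    using conn_avoid[OF wV vV w2V vw w2(2)] by blast
  have "last q \<in> set q" using q(1) by simp
  then have ex: "\<exists>x\<in>set q. x \<in> W" using q(3) w2(1) by blast
  then obtain q1 z q2 where qs: "q = q1 @ z # q2" "z \<in> W" "\<forall>x\<in>set q1. x \<notin> W"
    using split_list_first_prop[OF ex] by blast
  have q1ne: "q1 \<noteq> []" using qs q(2) wv(2) by auto
  define e where "e = w # q1 @ [z]"
  have wq: "wk Es ((q1 @ [z]) @ q2)" using q(4) qs by simp
  then have "wk Es (q1 @ [z])" by (rule wk_appendD[THEN conjunct1])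
  moreover have "hd (q1 @ [z]) = v" using q(2) qs q1ne by simp
  ultimately have "wk Es e" unfolding e_def using wv(3) by (cases q1) auto
  moreover have "distinct e" unfolding e_def using q(5) q(6) qs by simp
  moreover have "2 \<le> length e" unfolding e_def by simp
  moreover have "set e \<inter> W = {hd e, last e}" unfolding e_def using qs(2,3) wv(1) by auto
  moreover have "v \<in> set e" unfolding e_def using q(2) qs q1ne by (cases q1) auto
  ultimately show ?thesis using wv(2) unfolding ear_def by blast
qed

end

lemma ear_hd_last: "ear F W p \<Longrightarrow> hd p \<noteq> last p"
  unfolding ear_def by (cases p) auto

lemma ear_ne: "ear F W p \<Longrightarrow> p \<noteq> []"
  unfolding ear_def by auto

lemma ear_hdW: "ear F W p \<Longrightarrow> hd p \<in> W" and ear_lastW: "ear F W p \<Longrightarrow> last p \<in> W"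
  unfolding ear_def by auto

lemma ear_int: "ear F W p \<Longrightarrow> v \<in> set p \<Longrightarrow> v \<in> W \<Longrightarrow> v = hd p \<or> v = last p"
  unfolding ear_def by auto

lemma splice_B0:
  assumes P: "ear F W P" and Q: "ear F (W \<union> set P) Q" and c: "hd Q \<in> W" and d: "last Q \<notin> W"
    and cb: "hd Q \<noteq> last P"
  shows "\<exists>R. ear F W R \<and> set Q \<subseteq> set R"
proof -
  have Qne: "Q \<noteq> []" using ear_ne[OF Q] .
  have Pne: "P \<noteq> []" using ear_ne[OF P] .
  have dP: "last Q \<in> set P" using ear_lastW[OF Q] d by blast
  then obtain P1 P2 where Ps: "P = P1 @ last Q # P2" by (meson split_list)
  have hdP: "hd P \<in> W" "last P \<in> W" using ear_hdW[OF P] ear_lastW[OF P] by auto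
  have P2ne: "P2 \<noteq> []" using Ps hdP d by auto
  have P1ne: "P1 \<noteq> []" using Ps hdP d by auto
  have dist: "distinct P" using P unfolding ear_def by blast
  have lastP: "last P = last P2" using Ps P2ne by simp
  have hdP1: "hd P = hd P1" using Ps P1ne by simp
  have wP: "wk F P" using P unfolding ear_def by blast
  have wP2: "wk F (last Q # P2)" using wk_appendD[of F P1 "last Q # P2"] wP Ps by simp
  have wQ: "wk F Q" using Q unfolding ear_def by blast
  have Qsplit: "Q = butlast Q @ [last Q]" using Qne by simp
  have wQ': "wk F (butlast Q @ [last Q])" using wQ Qsplit by simp
  define R where "R = Q @ P2"
  have "R = butlast Q @ last Q # P2" unfolding R_def by (subst Qsplit) simp
  then have wR: "wk F R" using wk_join[OF wQ' wP2] by simp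
  have QintP: "\<And>v. v \<in> set Q \<Longrightarrow> v \<in> set P \<Longrightarrow> v = hd Q \<or> v = last Q"
    using ear_int[OF Q] by blast
  have PW: "\<And>v. v \<in> set P \<Longrightarrow> v \<in> W \<Longrightarrow> v = hd P \<or> v = last P"
    using ear_int[OF P] by blast
  have QW: "\<And>v. v \<in> set Q \<Longrightarrow> v \<in> W \<Longrightarrow> v = hd Q \<or> v = last Q"
    using ear_int[OF Q] by blast
  have d12: "set P1 \<inter> set P2 = {}" "last Q \<notin> set P1" "last Q \<notin> set P2" using dist Ps by auto
  have hP1: "hd P1 \<in> set P1" using P1ne by simp
  have lP2: "last P2 \<in> set P2" using P2ne by simp
  have disj: "set Q \<inter> set P2 = {}"
  proof (rule ccontr)
    assume "set Q \<inter> set P2 \<noteq> {}"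
    then obtain v where v: "v \<in> set Q" "v \<in> set P2" by blast
    then have "v \<in> set P" using Ps by simp
    then have "v = hd Q \<or> v = last Q" using QintP v by blast
    then have "v = hd Q" using d12 v by blast
    then have "v = hd P \<or> v = last P" using PW c \<open>v \<in> set P\<close> by blast
    moreover have "v \<noteq> last P" using cb \<open>v = hd Q\<close> by simp
    ultimately have "v = hd P1" using hdP1 by simp
    then show False using hP1 d12(1) v(2) by blast
  qed
  have "distinct Q" using Q unfolding ear_def by blast
  moreover have "distinct P2" using dist Ps by simp
  ultimately have "distinct R" unfolding R_def using disj by simp
  moreover have "2 \<le> length R" using Q unfolding R_def ear_def by simp
  moreover have "set R \<inter> W = {hd R, last R}"
  proof -
    have hR: "hd R = hd Q" unfolding R_def using Qne by simp
    have lR: "last R = last P" unfolding R_def using P2ne lastP by simp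
    have "set Q \<inter> W = {hd Q}"
    proof
      show "set Q \<inter> W \<subseteq> {hd Q}"
      proof
        fix v assume v: "v \<in> set Q \<inter> W"
        then have "v = hd Q \<or> v = last Q" using QW by blast
        moreover have "v \<noteq> last Q" using v d by blast
        ultimately show "v \<in> {hd Q}" by simp
      qed
      show "{hd Q} \<subseteq> set Q \<inter> W" using c Qne by simp
    qed
    moreover have "set P2 \<inter> W = {last P}"
    proof
      show "set P2 \<inter> W \<subseteq> {last P}"
      proof
        fix v assume "v \<in> set P2 \<inter> W"
        then have "v \<in> set P" "v \<in> W" "v \<in> set P2" using Ps by auto
        then have "v = hd P \<or> v = last P" using PW by blast
        moreover have "v \<noteq> hd P"
        proof
          assume "v = hd P"
          then have "v \<in> set P1" using hdP1 hP1 by simp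
          then show False using d12(1) \<open>v \<in> set P2\<close> by blast
        qed
        ultimately show "v \<in> {last P}" by simp
      qed
      show "{last P} \<subseteq> set P2 \<inter> W" using lastP lP2 hdP by auto
    qed
    moreover have "set R \<inter> W = (set Q \<inter> W) \<union> (set P2 \<inter> W)" unfolding R_def by auto
    ultimately show ?thesis using hR lR by (simp add: insert_commute)
  qed
  ultimately have "ear F W R" using wR unfolding ear_def by blast
  moreover have "set Q \<subseteq> set R" unfolding R_def by simp
  ultimately show ?thesis by blast
qed

lemma splice_C0:
  assumes P: "ear F W P" and Q: "ear F (W \<union> set P) Q" and c: "hd Q \<notin> W" and d: "last Q \<notin> W"
    and Ps: "P = P1 @ hd Q # P2" and dP2: "last Q \<in> set P2"
  shows "\<exists>R. ear F W R \<and> set Q \<subseteq> set R"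
proof -
  obtain P3 P4 where P2s: "P2 = P3 @ last Q # P4" using dP2 by (meson split_list)
  have Qne: "Q \<noteq> []" using ear_ne[OF Q] .
  have Pfull: "P = P1 @ hd Q # P3 @ last Q # P4" using Ps P2s by simp
  have hdP: "hd P \<in> W" "last P \<in> W" using ear_hdW[OF P] ear_lastW[OF P] by auto
  have P1ne: "P1 \<noteq> []"
  proof
    assume "P1 = []" then have "hd P = hd Q" using Pfull by simp
    then show False using hdP c by simp
  qed
  have P4ne: "P4 \<noteq> []"
  proof
    assume "P4 = []" then have "last P = last Q" using Pfull by simp
    then show False using hdP d by simp
  qed
  have dist: "distinct P" using P unfolding ear_def by blast
  have dP: "distinct P1" "distinct P4" "set P1 \<inter> set P4 = {}" "hd Q \<notin> set P1" "hd Q \<notin> set P4"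
     "last Q \<notin> set P1" "last Q \<notin> set P4" using dist unfolding Pfull by auto
  have dQ: "distinct Q" using Q unfolding ear_def by blast
  have QintP: "\<And>v. v \<in> set Q \<Longrightarrow> v \<in> set P \<Longrightarrow> v = hd Q \<or> v = last Q"
    using ear_int[OF Q] by blast
  have QintW: "\<And>v. v \<in> set Q \<Longrightarrow> v \<in> W \<Longrightarrow> v = hd Q \<or> v = last Q"
    using ear_int[OF Q] by blast
  have PW: "\<And>v. v \<in> set P \<Longrightarrow> v \<in> W \<Longrightarrow> v = hd P \<or> v = last P"
    using ear_int[OF P] by blast
  have QP1: "set Q \<inter> set P1 = {}"
  proof (rule ccontr)
    assume "set Q \<inter> set P1 \<noteq> {}"
    then obtain v where v: "v \<in> set Q" "v \<in> set P1" by blast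
    then have "v \<in> set P" unfolding Pfull by simp
    then have "v = hd Q \<or> v = last Q" using QintP v(1) by blast
    then show False using dP v(2) by auto
  qed
  have QP4: "set Q \<inter> set P4 = {}"
  proof (rule ccontr)
    assume "set Q \<inter> set P4 \<noteq> {}"
    then obtain v where v: "v \<in> set Q" "v \<in> set P4" by blast
    then have "v \<in> set P" unfolding Pfull by simp
    then have "v = hd Q \<or> v = last Q" using QintP v(1) by blast
    then show False using dP v(2) by auto
  qed
  have wP: "wk F P" using P unfolding ear_def by blast
  have "wk F ((P1 @ [hd Q]) @ (P3 @ last Q # P4))" using wP Pfull by simp
  then have w1: "wk F (P1 @ [hd Q])" by (rule wk_appendD[THEN conjunct1])
  have "wk F ((P1 @ hd Q # P3) @ (last Q # P4))" using wP Pfull by simp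
  then have w4: "wk F (last Q # P4)" by (rule wk_appendD[THEN conjunct2])
  have wQ: "wk F Q" using Q unfolding ear_def by blast
  have Qsplit: "Q = butlast Q @ [last Q]" using Qne by simp
  have wQ': "wk F (butlast Q @ [last Q])" using wQ Qsplit by simp
  have eqQ4: "Q @ P4 = butlast Q @ last Q # P4" by (subst Qsplit) simp
  have wQ4: "wk F (Q @ P4)" unfolding eqQ4 by (rule wk_join[OF wQ' w4])
  have Qc: "Q = hd Q # tl Q" using Qne by simp
  have "wk F (hd Q # (tl Q @ P4))" using wQ4 Qc by (metis append_Cons)
  then have wR0: "wk F (P1 @ hd Q # (tl Q @ P4))" using wk_join[OF w1] by blast
  define R where "R = P1 @ Q @ P4"
  have eqR: "R = P1 @ hd Q # (tl Q @ P4)" unfolding R_def by (subst Qc) simp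
  have wR: "wk F R" unfolding eqR by (rule wR0)
  have "distinct R" unfolding R_def using dP dQ QP1 QP4 by auto
  moreover have "2 \<le> length R" using Q unfolding R_def ear_def by simp
  moreover have "set R \<inter> W = {hd R, last R}"
  proof -
    have hR: "hd R = hd P" unfolding R_def using P1ne Pfull by simp
    have lR: "last R = last P" unfolding R_def using P4ne Pfull by simp
    have hP1: "hd P = hd P1" using P1ne Pfull by simp
    have lP4: "last P = last P4" using P4ne Pfull by simp
    have "hd P1 \<in> set P1" using P1ne by simp
    have "last P4 \<in> set P4" using P4ne by simp
    have e1: "set Q \<inter> W = {}"
    proof (rule ccontr)
      assume "set Q \<inter> W \<noteq> {}"
      then obtain v where v: "v \<in> set Q" "v \<in> W" by blast
      then have "v = hd Q \<or> v = last Q" using QintW by blast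
      then show False using c d v(2) by auto
    qed
    have e2: "set P1 \<inter> W = {hd P}"
    proof
      show "set P1 \<inter> W \<subseteq> {hd P}"
      proof
        fix v assume v: "v \<in> set P1 \<inter> W"
        then have "v \<in> set P" unfolding Pfull by simp
        then have "v = hd P \<or> v = last P" using PW v by blast
        moreover have "v \<noteq> last P"
        proof
          assume "v = last P" then have "v \<in> set P4" using lP4 \<open>last P4 \<in> set P4\<close> by simp
          then show False using v dP(3) by blast
        qed
        ultimately show "v \<in> {hd P}" by simp
      qed
      show "{hd P} \<subseteq> set P1 \<inter> W" using hP1 \<open>hd P1 \<in> set P1\<close> hdP by simp
    qed
    have e3: "set P4 \<inter> W = {last P}"
    proof
      show "set P4 \<inter> W \<subseteq> {last P}"
      proof
        fix v assume v: "v \<in> set P4 \<inter> W"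
        then have "v \<in> set P" unfolding Pfull by simp
        then have "v = hd P \<or> v = last P" using PW v by blast
        moreover have "v \<noteq> hd P"
        proof
          assume "v = hd P" then have "v \<in> set P1" using hP1 \<open>hd P1 \<in> set P1\<close> by simp
          then show False using v dP(3) by blast
        qed
        ultimately show "v \<in> {last P}" by simp
      qed
      show "{last P} \<subseteq> set P4 \<inter> W" using lP4 \<open>last P4 \<in> set P4\<close> hdP by simp
    qed
    have "set R \<inter> W = (set P1 \<inter> W) \<union> (set Q \<inter> W) \<union> (set P4 \<inter> W)" unfolding R_def by auto
    then show ?thesis using e1 e2 e3 hR lR by (simp add: insert_commute)
  qed
  ultimately have "ear F W R" using wR unfolding ear_def by blast
  moreover have "set Q \<subseteq> set R" unfolding R_def by auto
  ultimately show ?thesis by blast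
qed


lemma ear_rev_W: "ear F (W \<union> set P) Q \<Longrightarrow> ear F (W \<union> set (rev P)) Q"
  by simp

lemma splice_B:
  assumes P: "ear F W P" and Q: "ear F (W \<union> set P) Q" and c: "hd Q \<in> W" and d: "last Q \<notin> W"
  shows "\<exists>R. ear F W R \<and> set Q \<subseteq> set R"
proof (cases "hd Q = last P")
  case False
  then show ?thesis using splice_B0[OF P Q c d] by blast
next
  case True
  have "hd P \<noteq> last P" using ear_hd_last[OF P] .
  then have "hd Q \<noteq> last (rev P)" using True by (simp add: last_rev)
  moreover have "ear F (W \<union> set (rev P)) Q" using Q by simp
  ultimately show ?thesis using splice_B0[OF ear_rev[OF P] _ c d] by blast
qed

lemma splice:
  assumes P: "ear F W P" and Q: "ear F (W \<union> set P) Q"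
  shows "\<exists>R. ear F W R \<and> set Q \<subseteq> set R"
proof -
  have Qne: "Q \<noteq> []" using ear_ne[OF Q] .
  have hl: "hd Q \<noteq> last Q" using ear_hd_last[OF Q] .
  have hQ: "hd Q \<in> W \<union> set P" and lQ: "last Q \<in> W \<union> set P"
    using ear_hdW[OF Q] ear_lastW[OF Q] by auto
  have QW: "\<And>v. v \<in> set Q \<Longrightarrow> v \<in> W \<union> set P \<Longrightarrow> v = hd Q \<or> v = last Q"
    using ear_int[OF Q] by blast
  show ?thesis
  proof (cases "hd Q \<in> W")
    case c: True
    show ?thesis
    proof (cases "last Q \<in> W")
      case True
      have "set Q \<inter> W = {hd Q, last Q}"
      proof
        show "set Q \<inter> W \<subseteq> {hd Q, last Q}" using QW by blast
        show "{hd Q, last Q} \<subseteq> set Q \<inter> W" using c True Qne by simp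
      qed
      then have "ear F W Q" using Q unfolding ear_def by blast
      then show ?thesis by blast
    next
      case False
      then show ?thesis using splice_B[OF P Q c] by blast
    qed
  next
    case c: False
    show ?thesis
    proof (cases "last Q \<in> W")
      case True
      have Q': "ear F (W \<union> set P) (rev Q)" using ear_rev[OF Q] .
      have "hd (rev Q) \<in> W" "last (rev Q) \<notin> W" using True c Qne by (auto simp: hd_rev last_rev)
      then obtain R where "ear F W R" "set (rev Q) \<subseteq> set R" using splice_B[OF P Q'] by blast
      then show ?thesis by auto
    next
      case d: False
      have cP: "hd Q \<in> set P" using hQ c by blast
      have dP: "last Q \<in> set P" using lQ d by blast
      obtain P1 P2 where Ps: "P = P1 @ hd Q # P2" using cP by (meson split_list)
      have "last Q \<in> set P1 \<or> last Q \<in> set P2" using dP hl Ps by auto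
      then show ?thesis
      proof
        assume "last Q \<in> set P2"
        then show ?thesis using splice_C0[OF P Q c d Ps] by blast
      next
        assume a: "last Q \<in> set P1"
        have Ps': "rev P = rev P2 @ hd Q # rev P1" using Ps by simp
        have "last Q \<in> set (rev P1)" using a by simp
        moreover have "ear F (W \<union> set (rev P)) Q" using Q by simp
        ultimately show ?thesis using splice_C0[OF ear_rev[OF P] _ c d Ps'] by blast
      qed
    qed
  qed
qed

context hs
begin

lemma ear_through:
  assumes "W \<subseteq> Vs" "a \<in> W" "b \<in> W" "a \<noteq> b" "t \<in> Vs" "t \<notin> W"
  shows "\<exists>R. ear Es W R \<and> t \<in> set R"
  using assms
proof (induction "card (Vs - W)" arbitrary: W rule: less_induct)
  case less
  obtain e v where ev: "ear Es W e" "v \<in> set e" "v \<notin> W"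
    using basic_ear[OF less(2-5) less(6,7)] by blast
  show ?case
  proof (cases "t \<in> set e")
    case True
    then show ?thesis using ev by blast
  next
    case False
    define W' where "W' = W \<union> set e"
    have "set e \<subseteq> \<Union>Es" using ev(1) wk_set unfolding ear_def by blast
    then have W'V: "W' \<subseteq> Vs" unfolding W'_def using less(2) sub by blast
    have vV: "v \<in> Vs" using ev(2) \<open>set e \<subseteq> \<Union>Es\<close> sub by blast
    have "Vs - W' \<subset> Vs - W" unfolding W'_def using ev(2,3) vV by blast
    then have lt: "card (Vs - W') < card (Vs - W)" using finV by (meson finite_Diff psubset_card_mono)
    have "a \<in> W'" "b \<in> W'" "t \<notin> W'" unfolding W'_def using less(3,4,7) False by auto
    then obtain Q where Q: "ear Es W' Q" "t \<in> set Q"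
      using less(1)[OF lt W'V _ _ less(5) less(6)] by blast
    obtain R where "ear Es W R" "set Q \<subseteq> set R"
      using splice[OF ev(1), of Q] Q(1) unfolding W'_def by blast
    then show ?thesis using Q(2) by blast
  qed
qed

end

lemma is_cycle_intro:
  assumes "distinct c" "3 \<le> length c" "wk F c" "{last c, hd c} \<in> F"
  shows "is_cycle F c"
  unfolding is_cycle_def
proof (intro conjI allI impI)
  fix i assume i: "i < length c"
  show "{c ! i, c ! ((i + 1) mod length c)} \<in> F"
  proof (cases "i + 1 < length c")
    case True
    then show ?thesis using assms(3) unfolding wk_nth by simp
  next
    case False
    then have "i = length c - 1" using i by simp
    moreover have "c \<noteq> []" using assms(2) by auto
    ultimately have "c ! i = last c" "(i + 1) mod length c = 0" "c ! 0 = hd c"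
      by (auto simp: last_conv_nth hd_conv_nth)
    then show ?thesis using assms(4) by simp
  qed
qed (use assms in auto)

lemma cycle_set: "is_cycle F c \<Longrightarrow> set c \<subseteq> \<Union>F"
proof
  fix v assume c: "is_cycle F c" and v: "v \<in> set c"
  then obtain i where i: "i < length c" "c ! i = v" by (meson in_set_conv_nth)
  then have "{c ! i, c ! ((i + 1) mod length c)} \<in> F" using c unfolding is_cycle_def by blast
  then show "v \<in> \<Union>F" using i by blast
qed

context hs
begin

lemma nbr_avoid:
  assumes "t \<in> Vs" "a \<in> Vs" "a \<noteq> t"
  shows "\<exists>c. {t, c} \<in> Es \<and> c \<noteq> t \<and> c \<noteq> a"
proof -
  obtain b where b: "b \<in> Vs" "b \<noteq> t" "b \<noteq> a" using three_elem[OF finV cardV] by blast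
  have "t \<noteq> a" "b \<noteq> a" using assms b by auto
  then obtain q where q: "q \<noteq> []" "hd q = t" "last q = b" "wk Es q" "distinct q" "a \<notin> set q"
    using conn_avoid[OF assms(2) assms(1) b(1)] by blast
  obtain q' where q': "q = t # q'" using q(1,2) by (cases q) auto
  have "q' \<noteq> []" using q' q(3) b(2) by auto
  then obtain c q'' where q'': "q' = c # q''" by (cases q') auto
  have "{t, c} \<in> Es" using q(4) q' q'' by simp
  moreover have "c \<noteq> t" using q(5) q' q'' by auto
  moreover have "c \<noteq> a" using q(6) q' q'' by auto
  ultimately show ?thesis by blast
qed

lemma cycle_through:
  assumes t: "t \<in> Vs"
  shows "\<exists>c. is_cycle Es c \<and> t \<in> set c"
proof -
  obtain a0 where a0: "a0 \<in> Vs" "a0 \<noteq> t" using three_elem[OF finV cardV] by blast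
  obtain a where a: "{t, a} \<in> Es" "a \<noteq> t" using nbr_avoid[OF t a0] by blast
  have aV: "a \<in> Vs" using a(1) sub by blast
  obtain c where c: "{t, c} \<in> Es" "c \<noteq> t" "c \<noteq> a" using nbr_avoid[OF t aV a(2)] by blast
  have cV: "c \<in> Vs" using c(1) sub by blast
  obtain p where p: "p \<noteq> []" "hd p = c" "last p = a" "wk Es p" "distinct p" "t \<notin> set p"
    using conn_avoid[OF t cV aV c(2) a(2)] by blast
  obtain p' where p': "p = c # p'" using p(1,2) by (cases p) auto
  have "p' \<noteq> []" using p' p(3) c(3) by auto
  then have "1 \<le> length p'" by (simp add: Suc_le_eq)
  then have len: "3 \<le> length (t # p)" using p' by simp
  have w: "wk Es (t # p)" using p' p(4) c(1) by simp
  have d: "distinct (t # p)" using p(5,6) by simp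
  have e: "{last (t # p), hd (t # p)} \<in> Es" using p(1,3) a(1) by (simp add: insert_commute)
  have "is_cycle Es (t # p)" using is_cycle_intro[OF d len w e] .
  then show ?thesis by auto
qed

end

definition Wi :: "'a list \<Rightarrow> 'a list list \<Rightarrow> nat \<Rightarrow> 'a set" where
  "Wi c es i = set c \<union> \<Union>(set ` set (take i es))"

definition Inv :: "'a set set \<Rightarrow> 'a set \<Rightarrow> 'a list \<Rightarrow> 'a list list \<Rightarrow> bool" where
  "Inv F T c es \<longleftrightarrow> is_cycle F c \<and> T \<inter> set c \<noteq> {} \<and>
     (\<forall>i<length es. ear F (Wi c es i) (es ! i) \<and> (\<exists>t\<in>T. t \<in> set (es ! i) \<and> t \<notin> Wi c es i))"

lemma Wi_full: "Wi c es (length es) = set c \<union> \<Union>(set ` set es)"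
  unfolding Wi_def by simp

lemma Wi_Suc: "i < length es \<Longrightarrow> Wi c es (Suc i) = Wi c es i \<union> set (es ! i)"
  unfolding Wi_def by (auto simp: take_Suc_conv_app_nth)

lemma Wi_mono: "i \<le> j \<Longrightarrow> Wi c es i \<subseteq> Wi c es j"
proof -
  assume "i \<le> j"
  then have "set (take i es) \<subseteq> set (take j es)" by (rule set_take_subset_set_take)
  then show ?thesis unfolding Wi_def by auto
qed

lemma Wi_0: "Wi c es 0 = set c"
  unfolding Wi_def by simp

lemma Wi_app: "i \<le> length es \<Longrightarrow> Wi c (es @ [e]) i = Wi c es i"
  unfolding Wi_def by simp

context hs
begin

lemma Inv_sub:
  assumes "Inv Es T c es"
  shows "Wi c es (length es) \<subseteq> Vs"
proof -
  have "set c \<subseteq> Vs" using cycle_set[of Es c] assms sub unfolding Inv_def by blast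
  moreover have "set e \<subseteq> Vs" if e: "e \<in> set es" for e
  proof -
    obtain i where "i < length es" "es ! i = e" using e by (meson in_set_conv_nth)
    then have "ear Es (Wi c es i) e" using assms unfolding Inv_def by blast
    then show ?thesis using wk_set[of Es e] sub unfolding ear_def by blast
  qed
  ultimately show ?thesis unfolding Wi_full by blast
qed

lemma build:
  assumes TV: "T \<subseteq> Vs" and fT: "finite T" and I: "Inv Es T c es"
  shows "\<exists>es'. Inv Es T c es' \<and> T \<subseteq> Wi c es' (length es')"
  using I
proof (induction "card (T - Wi c es (length es))" arbitrary: es rule: less_induct)
  case less
  show ?case
  proof (cases "T \<subseteq> Wi c es (length es)")
    case True
    then show ?thesis using less(2) by blast
  next
    case False
    then obtain t where t: "t \<in> T" "t \<notin> Wi c es (length es)" by blast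
    let ?W = "Wi c es (length es)"
    have WV: "?W \<subseteq> Vs" using Inv_sub[OF less(2)] .
    have cyc: "is_cycle Es c" using less(2) unfolding Inv_def by blast
    then have "distinct c" "3 \<le> length c" unfolding is_cycle_def by auto
    then have l: "0 < length c" "1 < length c" by auto
    have "c ! 0 \<noteq> c ! 1" using l \<open>distinct c\<close> by (simp add: nth_eq_iff_index_eq)
    moreover have "c ! 0 \<in> set c" "c ! 1 \<in> set c" using l by simp_all
    ultimately have ab: "c ! 0 \<in> ?W" "c ! 1 \<in> ?W" "c ! 0 \<noteq> c ! 1" unfolding Wi_full by auto
    obtain R where R: "ear Es ?W R" "t \<in> set R"
      using ear_through[OF WV ab _ t(2)] t(1) TV by blast
    define es' where "es' = es @ [R]"
    have inv': "Inv Es T c es'"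
      unfolding Inv_def
    proof (intro conjI)
      show "is_cycle Es c" using cyc .
      show "T \<inter> set c \<noteq> {}" using less(2) unfolding Inv_def by blast
      show "\<forall>i<length es'. ear Es (Wi c es' i) (es' ! i) \<and> (\<exists>t\<in>T. t \<in> set (es' ! i) \<and> t \<notin> Wi c es' i)"
      proof (intro allI impI)
      fix i assume i: "i < length es'"
      show "ear Es (Wi c es' i) (es' ! i) \<and> (\<exists>t\<in>T. t \<in> set (es' ! i) \<and> t \<notin> Wi c es' i)"
      proof (cases "i < length es")
        case True
        then have "es' ! i = es ! i" "Wi c es' i = Wi c es i" unfolding es'_def
          by (auto simp: nth_append Wi_app)
        then show ?thesis using less(2) True unfolding Inv_def by simp
      next
        case False
        then have "i = length es" using i unfolding es'_def by simp
        then have "es' ! i = R" "Wi c es' i = ?W" unfolding es'_def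
          by (auto simp: Wi_app)
        then show ?thesis using R t by auto
      qed
      qed
    qed
    have lt: "card (T - Wi c es' (length es')) < card (T - ?W)"
    proof (rule psubset_card_mono)
      show "finite (T - ?W)" using fT by simp
      have "Wi c es' (length es') = ?W \<union> set R" unfolding es'_def Wi_full by auto
      then show "T - Wi c es' (length es') \<subset> T - ?W" using t R(2) by auto
    qed
    show ?thesis using less(1)[OF lt inv'] .
  qed
qed

end

lemma Inv_count:
  assumes I: "Inv F T c es" and fT: "finite T" and i: "i \<le> length es"
  shows "Suc i \<le> card (T \<inter> Wi c es i)"
  using i
proof (induction i)
  case 0
  have "T \<inter> set c \<noteq> {}" using I unfolding Inv_def by blast
  then have "card (T \<inter> set c) \<noteq> 0" using fT by simp
  then show ?case unfolding Wi_0 by linarith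
next
  case (Suc i)
  then have il: "i < length es" by simp
  then obtain t where t: "t \<in> T" "t \<in> set (es ! i)" "t \<notin> Wi c es i" using I unfolding Inv_def by blast
  have "T \<inter> Wi c es i \<subset> T \<inter> Wi c es (Suc i)" using t Wi_Suc[OF il, of c] by auto
  then have "card (T \<inter> Wi c es i) < card (T \<inter> Wi c es (Suc i))"
    using fT by (meson finite_Int psubset_card_mono)
  then show ?case using Suc by simp
qed

lemma seg_reach:
  assumes "\<forall>k. j \<le> k \<and> k < m \<longrightarrow> (p ! k, p ! Suc k) \<in> r" "j \<le> m"
  shows "(p ! j, p ! m) \<in> r\<^sup>*"
  using assms
proof (induction m)
  case 0
  then show ?case by simp
next
  case (Suc m)
  show ?case
  proof (cases "j = Suc m")
    case True then show ?thesis by simp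
  next
    case False
    then have "j \<le> m" using Suc(3) by simp
    then have "(p ! j, p ! m) \<in> r\<^sup>*" using Suc by simp
    moreover have "(p ! m, p ! Suc m) \<in> r" using Suc(2) \<open>j \<le> m\<close> by simp
    ultimately show ?thesis by (rule rtrancl_into_rtrancl)
  qed
qed

lemma conn_anchor:
  assumes "sym r" "\<forall>w\<in>U. \<exists>z\<in>Z. (w, z) \<in> r\<^sup>*" "\<forall>a\<in>Z. \<forall>b\<in>Z. (a, b) \<in> r\<^sup>*"
    "u \<in> U" "v \<in> U"
  shows "(u, v) \<in> r\<^sup>*"
proof -
  obtain zu where zu: "zu \<in> Z" "(u, zu) \<in> r\<^sup>*" using assms(2,4) by blast
  obtain zv where zv: "zv \<in> Z" "(v, zv) \<in> r\<^sup>*" using assms(2,5) by blast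
  have s: "sym (r\<^sup>*)" using assms(1) by (rule sym_rtrancl)
  have "(zv, v) \<in> r\<^sup>*" using zv(2) s by (meson symD)
  moreover have "(zu, zv) \<in> r\<^sup>*" using assms(3) zu(1) zv(1) by blast
  ultimately show ?thesis using zu(2) by (meson rtrancl_trans)
qed

lemma tnc_conn:
  assumes "two_node_connected U F" "u \<in> U" "v \<in> U"
  shows "(u, v) \<in> (adj {e\<in>F. e \<subseteq> U})\<^sup>*"
proof -
  have p: "finite U \<and> card U > 2 \<and> (\<forall>x\<in>U. connected_graph (U - {x}) {e\<in>F. x \<notin> e})"
    by (rule assms(1)[unfolded two_node_connected_def])
  have "finite U" "card U > 2" using p by blast+
  then obtain z where z: "z \<in> U" "z \<noteq> u" "z \<noteq> v" using three_elem[of U u v] by blast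
  have "connected_graph (U - {z}) {e\<in>F. z \<notin> e}" using p z(1) by blast
  then have "(u, v) \<in> (adj {e\<in>{e\<in>F. z \<notin> e}. e \<subseteq> U - {z}})\<^sup>*"
    unfolding connected_graph_def using assms(2,3) z by blast
  moreover have "adj {e\<in>{e\<in>F. z \<notin> e}. e \<subseteq> U - {z}} \<subseteq> adj {e\<in>F. e \<subseteq> U}"
    by (rule adj_mono) blast
  then have "(adj {e\<in>{e\<in>F. z \<notin> e}. e \<subseteq> U - {z}})\<^sup>* \<subseteq> (adj {e\<in>F. e \<subseteq> U})\<^sup>*"
    by (rule rtrancl_mono)
  ultimately show ?thesis by blast
qed

lemma fm_ne:
  fixes i n m :: nat
  assumes "i < n" "m + 2 \<le> n"
  shows "(i + 1 + m) mod n \<noteq> i"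
proof (cases "i + 1 + m < n")
  case True
  then show ?thesis by simp
next
  case False
  then have "(i + 1 + m) mod n = (i + 1 + m - n) mod n" by (simp add: le_mod_geq)
  also have "\<dots> = i + 1 + m - n" using assms by simp
  finally have "(i + 1 + m) mod n = i + 1 + m - n" .
  moreover have "i + 1 + m - n \<noteq> i" using assms False by arith
  ultimately show ?thesis by simp
qed

lemma fm_cover:
  fixes i n j :: nat
  assumes "i < n" "j < n" "j \<noteq> i"
  shows "\<exists>m. m + 2 \<le> n \<and> (i + 1 + m) mod n = j"
proof (cases "i < j")
  case True
  then show ?thesis using assms by (intro exI[of _ "j - i - 1"]) simp
next
  case False
  then have "j < i" using assms by simp
  have "i + 1 + (n - i - 1 + j) = n + j" using assms by simp
  then have "(i + 1 + (n - i - 1 + j)) mod n = j" using assms by simp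
  moreover have "n - i - 1 + j + 2 \<le> n" using \<open>j < i\<close> assms by simp
  ultimately show ?thesis by blast
qed

lemma cycle_edges_Union:
  assumes "is_cycle F c"
  shows "\<Union>(cycle_edges c) = set c"
proof
  have "3 \<le> length c" using assms unfolding is_cycle_def by blast
  then have n: "0 < length c" by linarith
  show "\<Union>(cycle_edges c) \<subseteq> set c"
    unfolding cycle_edges_def using n by auto
  show "set c \<subseteq> \<Union>(cycle_edges c)"
  proof
    fix v assume "v \<in> set c"
    then obtain j where "j < length c" "c ! j = v" by (meson in_set_conv_nth)
    then show "v \<in> \<Union>(cycle_edges c)" unfolding cycle_edges_def by blast
  qed
qed

lemma cycle_edges_sub: "is_cycle F c \<Longrightarrow> cycle_edges c \<subseteq> F"
  unfolding cycle_edges_def is_cycle_def by blast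

lemma cycle_edges_finite: "finite (cycle_edges c)"
proof -
  have "finite {i. i < length c}" by simp
  then show ?thesis unfolding cycle_edges_def by (rule finite_image_set)
qed

lemma path_edges_finite: "finite (path_edges c)"
proof -
  have "finite {i. i + 1 < length c}" by (rule finite_subset[of _ "{..<length c}"]) auto
  then show ?thesis unfolding path_edges_def by (rule finite_image_set)
qed

lemma cycle_2nc:
  assumes cyc: "is_cycle F c"
  shows "two_node_connected (\<Union>(cycle_edges c)) (cycle_edges c)"
proof -
  let ?C = "cycle_edges c"
  let ?n = "length c"
  have U: "\<Union>?C = set c" by (rule cycle_edges_Union[OF cyc])
  have dist: "distinct c" and n3: "3 \<le> ?n" using cyc unfolding is_cycle_def by auto
  have fin: "finite (set c)" by simp
  have np: "0 < ?n" using n3 by linarith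
  have card: "card (set c) > 2" using dist n3 by (simp add: distinct_card)
  have conn: "connected_graph (set c - {x}) {e\<in>?C. x \<notin> e}" if x: "x \<in> set c" for x
  proof -
    obtain i where i: "i < ?n" "c ! i = x" using x by (meson in_set_conv_nth)
    let ?r = "adj {e\<in>{e\<in>?C. x \<notin> e}. e \<subseteq> set c - {x}}"
    have edge: "(c ! k, c ! ((k + 1) mod ?n)) \<in> ?r"
      if "k < ?n" "c ! k \<noteq> x" "c ! ((k + 1) mod ?n) \<noteq> x" for k
    proof -
      have "{c ! k, c ! ((k + 1) mod ?n)} \<in> ?C" unfolding cycle_edges_def using that(1) by blast
      moreover have "0 < ?n" using n3 by linarith
      then have "(k + 1) mod ?n < ?n" by simp
      then have "{c ! k, c ! ((k + 1) mod ?n)} \<subseteq> set c" using that(1) by (simp add: nth_mem)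
      ultimately show ?thesis using that(2,3) unfolding adj_def by auto
    qed
    let ?f = "\<lambda>m. (i + 1 + m) mod ?n"
    have fne: "c ! ?f m \<noteq> x" if "m + 2 \<le> ?n" for m
    proof
      assume "c ! ?f m = x"
      then have "c ! ?f m = c ! i" using i by simp
      moreover have "?f m < ?n" using np by simp
      ultimately have "?f m = i" using dist i(1) by (simp add: nth_eq_iff_index_eq)
      then show False using fm_ne[OF i(1) that] by simp
    qed
    have reach: "(c ! ?f 0, c ! ?f m) \<in> ?r\<^sup>*" if "m + 2 \<le> ?n" for m
      using that
    proof (induction m)
      case 0 then show ?case by simp
    next
      case (Suc m)
      then have IH: "(c ! ?f 0, c ! ?f m) \<in> ?r\<^sup>*" by simp
      have eq: "(?f m + 1) mod ?n = ?f (Suc m)" by (simp add: mod_Suc_eq)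
      have "(c ! ?f m, c ! ((?f m + 1) mod ?n)) \<in> ?r"
        using edge[of "?f m"] fne[of m] fne[of "Suc m"] Suc(2) np eq by simp
      then have "(c ! ?f m, c ! ?f (Suc m)) \<in> ?r" using eq by simp
      then show ?case using IH by (rule rtrancl_into_rtrancl[rotated])
    qed
    have A: "\<forall>w\<in>set c - {x}. \<exists>z\<in>{c ! ?f 0}. (w, z) \<in> ?r\<^sup>*"
    proof
      fix w assume w: "w \<in> set c - {x}"
      then obtain j where j: "j < ?n" "c ! j = w" by (meson DiffD1 in_set_conv_nth)
      have "j \<noteq> i" using j i w by auto
      then obtain m where m: "m + 2 \<le> ?n" "?f m = j" using fm_cover[OF i(1) j(1)] by blast
      have "(c ! ?f 0, w) \<in> ?r\<^sup>*" using reach[OF m(1)] m(2) j(2) by simp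
      then have "(w, c ! ?f 0) \<in> ?r\<^sup>*" using sym_rtrancl[OF sym_adj] by (meson symD)
      then show "\<exists>z\<in>{c ! ?f 0}. (w, z) \<in> ?r\<^sup>*" by blast
    qed
    have B: "\<forall>a\<in>{c ! ?f 0}. \<forall>b\<in>{c ! ?f 0}. (a, b) \<in> ?r\<^sup>*" by simp
    show ?thesis unfolding connected_graph_def
    proof (intro ballI)
      fix u v assume u: "u \<in> set c - {x}" and v: "v \<in> set c - {x}"
      show "(u, v) \<in> ?r\<^sup>*" by (rule conn_anchor[OF sym_adj A B u v])
    qed
  qed
  show ?thesis unfolding two_node_connected_def U using fin card conn by blast
qed

lemma path_edges_Union:
  assumes "2 \<le> length p"
  shows "\<Union>(path_edges p) = set p"
proof
  show "\<Union>(path_edges p) \<subseteq> set p" unfolding path_edges_def by auto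
  show "set p \<subseteq> \<Union>(path_edges p)"
  proof
    fix v assume "v \<in> set p"
    then obtain j where j: "j < length p" "p ! j = v" by (meson in_set_conv_nth)
    show "v \<in> \<Union>(path_edges p)"
    proof (cases "j + 1 < length p")
      case True
      then have "{p ! j, p ! (j + 1)} \<in> path_edges p" unfolding path_edges_def by blast
      then show ?thesis using j by blast
    next
      case False
      then have "j - 1 + 1 < length p" "j - 1 + 1 = j" using j assms by auto
      then have "{p ! (j - 1), p ! (j - 1 + 1)} \<in> path_edges p" unfolding path_edges_def by blast
      then show ?thesis using j \<open>j - 1 + 1 = j\<close> by auto
    qed
  qed
qed

lemma path_edges_sub: "wk F p \<Longrightarrow> path_edges p \<subseteq> F"
  unfolding path_edges_def wk_nth by blast

lemma path_ext:
  assumes tnc: "two_node_connected (\<Union>F) F" and dist: "distinct p" and ne: "p \<noteq> []"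
    and hl: "hd p \<noteq> last p" and hin: "hd p \<in> \<Union>F" and lin: "last p \<in> \<Union>F"
  shows "two_node_connected (\<Union>(F \<union> path_edges p)) (F \<union> path_edges p)"
proof -
  let ?F' = "F \<union> path_edges p"
  let ?n = "length p"
  have n2: "2 \<le> ?n"
  proof (rule ccontr)
    assume "\<not> 2 \<le> ?n"
    moreover have "?n \<noteq> 0" using ne by simp
    ultimately have "?n = 1" by linarith
    then show False using hl ne by (simp add: hd_conv_nth last_conv_nth)
  qed
  have U': "\<Union>?F' = \<Union>F \<union> set p" using path_edges_Union[OF n2] by auto
  have tp: "finite (\<Union>F) \<and> card (\<Union>F) > 2 \<and> (\<forall>x\<in>\<Union>F. connected_graph (\<Union>F - {x}) {e\<in>F. x \<notin> e})"
    by (rule tnc[unfolded two_node_connected_def])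
  have fin: "finite (\<Union>?F')" using tp U' by simp
  have "card (\<Union>F) \<le> card (\<Union>?F')" using fin by (rule card_mono) auto
  then have card: "card (\<Union>?F') > 2" using tp by linarith
  have conn: "connected_graph (\<Union>?F' - {x}) {e\<in>?F'. x \<notin> e}" if x: "x \<in> \<Union>?F'" for x
  proof -
    let ?E = "{e\<in>{e\<in>?F'. x \<notin> e}. e \<subseteq> \<Union>?F' - {x}}"
    let ?r = "adj ?E"
    have inF: "\<forall>a\<in>\<Union>F - {x}. \<forall>b\<in>\<Union>F - {x}. (a, b) \<in> ?r\<^sup>*"
    proof (cases "x \<in> \<Union>F")
      case True
      then have "connected_graph (\<Union>F - {x}) {e\<in>F. x \<notin> e}" using tp by blast
      then have h: "\<forall>a\<in>\<Union>F - {x}. \<forall>b\<in>\<Union>F - {x}. (a, b) \<in> (adj {e\<in>{e\<in>F. x \<notin> e}. e \<subseteq> \<Union>F - {x}})\<^sup>*"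
        unfolding connected_graph_def .
      have "adj {e\<in>{e\<in>F. x \<notin> e}. e \<subseteq> \<Union>F - {x}} \<subseteq> ?r" by (rule adj_mono) auto
      then have "(adj {e\<in>{e\<in>F. x \<notin> e}. e \<subseteq> \<Union>F - {x}})\<^sup>* \<subseteq> ?r\<^sup>*" by (rule rtrancl_mono)
      then show ?thesis using h by blast
    next
      case False
      have "adj {e\<in>F. e \<subseteq> \<Union>F} \<subseteq> ?r" using False by (intro adj_mono) auto
      then have sub: "(adj {e\<in>F. e \<subseteq> \<Union>F})\<^sup>* \<subseteq> ?r\<^sup>*" by (rule rtrancl_mono)
      show ?thesis
      proof (intro ballI)
        fix a b assume "a \<in> \<Union>F - {x}" "b \<in> \<Union>F - {x}"
        then have "(a, b) \<in> (adj {e\<in>F. e \<subseteq> \<Union>F})\<^sup>*" using tnc_conn[OF tnc] by blast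
        then show "(a, b) \<in> ?r\<^sup>*" using sub by blast
      qed
    qed
    have pe: "(p ! k, p ! Suc k) \<in> ?r" if "k + 1 < ?n" "p ! k \<noteq> x" "p ! Suc k \<noteq> x" for k
    proof -
      have e: "{p ! k, p ! (k + 1)} \<in> path_edges p" unfolding path_edges_def using that(1) by blast
      then have "{p ! k, p ! (k + 1)} \<subseteq> \<Union>?F'" by blast
      then show ?thesis using e that(2,3) unfolding adj_def by auto
    qed
    have symr: "sym (?r\<^sup>*)" by (rule sym_rtrancl[OF sym_adj])
    have A: "\<forall>w\<in>\<Union>?F' - {x}. \<exists>z\<in>\<Union>F - {x}. (w, z) \<in> ?r\<^sup>*"
    proof
      fix w assume w: "w \<in> \<Union>?F' - {x}"
      show "\<exists>z\<in>\<Union>F - {x}. (w, z) \<in> ?r\<^sup>*"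
      proof (cases "w \<in> \<Union>F")
        case True
        then show ?thesis using w by blast
      next
        case False
        then have "w \<in> set p" using w U' by blast
        then obtain j where j: "j < ?n" "p ! j = w" by (meson in_set_conv_nth)
        show ?thesis
        proof (cases "\<forall>k\<le>j. p ! k \<noteq> x")
          case True
          have "\<forall>k. 0 \<le> k \<and> k < j \<longrightarrow> (p ! k, p ! Suc k) \<in> ?r"
            using pe True j(1) by auto
          then have "(p ! 0, p ! j) \<in> ?r\<^sup>*" using seg_reach[of 0 j p ?r] by simp
          then have "(w, p ! 0) \<in> ?r\<^sup>*" using symr j(2) by (meson symD)
          moreover have "p ! 0 \<in> \<Union>F - {x}" using hin ne True by (simp add: hd_conv_nth)
          ultimately show ?thesis by blast
        next
          case False
          then obtain k where k: "k \<le> j" "p ! k = x" by blast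
          have nx: "p ! k' \<noteq> x" if "j \<le> k'" "k' < ?n" for k'
          proof
            assume "p ! k' = x"
            then have "p ! k' = p ! k" using k by simp
            then have "k' = k" using dist that(2) k(1) j(1) by (simp add: nth_eq_iff_index_eq)
            then have "k = j" using k(1) that(1) by simp
            then show False using k(2) j(2) w by simp
          qed
          have "\<forall>k'. j \<le> k' \<and> k' < ?n - 1 \<longrightarrow> (p ! k', p ! Suc k') \<in> ?r"
            using pe nx by auto
          then have "(p ! j, p ! (?n - 1)) \<in> ?r\<^sup>*" using seg_reach[of j "?n - 1" p ?r] j(1) by simp
          moreover have "p ! (?n - 1) \<in> \<Union>F - {x}" using lin ne nx[of "?n - 1"] j(1)
            by (simp add: last_conv_nth)
          ultimately show ?thesis using j(2) by blast
        qed
      qed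
    qed
    have B: "\<forall>a\<in>\<Union>F - {x}. \<forall>b\<in>\<Union>F - {x}. (a, b) \<in> ?r\<^sup>*" by (rule inF)
    show ?thesis unfolding connected_graph_def
    proof (intro ballI)
      fix u v assume u: "u \<in> \<Union>?F' - {x}" and v: "v \<in> \<Union>?F' - {x}"
      show "(u, v) \<in> ?r\<^sup>*" by (rule conn_anchor[OF sym_adj A B u v])
    qed
  qed
  show ?thesis unfolding two_node_connected_def using fin card conn by blast
qed

lemma is_path_iff: "is_path F vs s t \<longleftrightarrow> distinct vs \<and> vs \<noteq> [] \<and> hd vs = s \<and> last vs = t \<and> wk F vs"
  unfolding is_path_def wk_nth by blast

lemma Union_setbuilder: "\<Union>{f i |i. i < n} = (\<Union>i<n. f i)"
  by blast

lemma candidate_good: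
  assumes cyc: "cyc_spec Eg CYC" and path: "path_spec Eg PATH"
    and ch: "(S, Ts, ps) \<in> choices V T" and H: "candidate CYC PATH (S, Ts, ps) = Some H"
  shows "two_node_connected (\<Union>H) H \<and> T \<subseteq> \<Union>H \<and> H \<subseteq> Eg"
proof -
  have chs: "S \<subseteq> V \<and> card S \<le> 2 * card T \<and>
      1 \<le> length Ts \<and> length Ts \<le> card T \<and>
      (\<forall>i<length Ts. Ts ! i \<noteq> {}) \<and>
      (\<forall>i<length Ts. \<forall>j<length Ts. i \<noteq> j \<longrightarrow> Ts ! i \<inter> Ts ! j = {}) \<and>
      \<Union>(set Ts) = T \<union> S \<and> card (Ts ! 0) \<ge> 2 \<and>
      length ps = length Ts - 1 \<and>
      (\<forall>i<length ps. fst (ps ! i) \<noteq> snd (ps ! i) \<and>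
          fst (ps ! i) \<in> \<Union>(set (take (i + 1) Ts)) \<and>
          snd (ps ! i) \<in> \<Union>(set (take (i + 1) Ts)))"
    using ch unfolding choices_def by simp
  have lenTs: "length Ts = Suc (length ps)" using chs by linarith
  have UTs: "\<Union>(set Ts) = T \<union> S" using chs by blast
  have pss: "\<And>i. i < length ps \<Longrightarrow> fst (ps ! i) \<noteq> snd (ps ! i) \<and>
          fst (ps ! i) \<in> \<Union>(set (take (i + 1) Ts)) \<and> snd (ps ! i) \<in> \<Union>(set (take (i + 1) Ts))"
    using chs by blast
  obtain C where C: "CYC (Ts ! 0) = Some C"
  proof (cases "CYC (Ts ! 0)")
    case None
    then have "candidate CYC PATH (S, Ts, ps) = None" unfolding candidate_def by simp
    then show ?thesis using H by simp
  next
    case (Some C) then show ?thesis using that by blast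
  qed
  let ?Pth = "\<lambda>i. the (PATH (Ts ! (i + 1)) (fst (ps ! i)) (snd (ps ! i)))"
  have allP: "\<forall>i<length ps. PATH (Ts ! (i + 1)) (fst (ps ! i)) (snd (ps ! i)) \<noteq> None"
  proof (rule ccontr)
    assume "\<not> ?thesis"
    then have "candidate CYC PATH (S, Ts, ps) = None" unfolding candidate_def using C by simp
    then show False using H by simp
  qed
  have Heq: "H = C \<union> (\<Union>i<length ps. ?Pth i)"
    using H allP C unfolding candidate_def Union_setbuilder by simp
  obtain vs where vs: "is_cycle Eg vs" "Ts ! 0 \<subseteq> set vs" "C = cycle_edges vs"
    using cyc C unfolding cyc_spec_def by blast
  let ?G = "\<lambda>m. C \<union> (\<Union>i<m. ?Pth i)"
  have main: "two_node_connected (\<Union>(?G m)) (?G m) \<and> \<Union>(set (take (Suc m) Ts)) \<subseteq> \<Union>(?G m) \<and> ?G m \<subseteq> Eg"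
    if "m \<le> length ps" for m
    using that
  proof (induction m)
    case 0
    have "two_node_connected (\<Union>C) C" using cycle_2nc[OF vs(1)] vs(3) by simp
    moreover have "take (Suc 0) Ts = [Ts ! 0]" using lenTs by (simp add: take_Suc_conv_app_nth)
    then have "\<Union>(set (take (Suc 0) Ts)) \<subseteq> \<Union>C" using vs cycle_edges_Union[OF vs(1)] by simp
    moreover have "C \<subseteq> Eg" using cycle_edges_sub[OF vs(1)] vs(3) by simp
    ultimately show ?case by simp
  next
    case (Suc m)
    then have m: "m < length ps" by simp
    have IH: "two_node_connected (\<Union>(?G m)) (?G m)" "\<Union>(set (take (Suc m) Ts)) \<subseteq> \<Union>(?G m)" "?G m \<subseteq> Eg"
      using Suc by auto
    obtain P where P: "PATH (Ts ! (m + 1)) (fst (ps ! m)) (snd (ps ! m)) = Some P"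
      using allP m by blast
    then have PP: "?Pth m = P" by simp
    obtain ws where ws: "is_path Eg ws (fst (ps ! m)) (snd (ps ! m))" "Ts ! (m + 1) \<subseteq> set ws" "P = path_edges ws"
      using path P unfolding path_spec_def by blast
    have wsi: "distinct ws" "ws \<noteq> []" "hd ws = fst (ps ! m)" "last ws = snd (ps ! m)" "wk Eg ws"
      using ws(1) unfolding is_path_iff by auto
    have st: "fst (ps ! m) \<noteq> snd (ps ! m)" "fst (ps ! m) \<in> \<Union>(?G m)" "snd (ps ! m) \<in> \<Union>(?G m)"
      using pss[OF m] IH(2) by auto
    have Geq: "?G (Suc m) = ?G m \<union> path_edges ws" using PP ws(3) by (auto simp: lessThan_Suc)
    have hl: "hd ws \<noteq> last ws" using wsi st by simp
    have t1: "two_node_connected (\<Union>(?G (Suc m))) (?G (Suc m))"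
      unfolding Geq using path_ext[OF IH(1) wsi(1) wsi(2) hl] wsi st by simp
    have len2: "2 \<le> length ws"
    proof (rule ccontr)
      assume "\<not> 2 \<le> length ws"
      moreover have "length ws \<noteq> 0" using wsi by simp
      ultimately have "length ws = 1" by linarith
      then show False using hl wsi(2) by (simp add: hd_conv_nth last_conv_nth)
    qed
    have "take (Suc (Suc m)) Ts = take (Suc m) Ts @ [Ts ! Suc m]"
      using lenTs m by (simp add: take_Suc_conv_app_nth)
    then have "\<Union>(set (take (Suc (Suc m)) Ts)) = \<Union>(set (take (Suc m) Ts)) \<union> Ts ! Suc m" by (simp add: Un_commute)
    moreover have "Ts ! Suc m \<subseteq> \<Union>(path_edges ws)" using ws(2) path_edges_Union[OF len2] by simp
    ultimately have t2: "\<Union>(set (take (Suc (Suc m)) Ts)) \<subseteq> \<Union>(?G (Suc m))" using IH(2) unfolding Geq by auto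
    have t3: "?G (Suc m) \<subseteq> Eg" unfolding Geq using IH(3) path_edges_sub[OF wsi(5)] by blast
    show ?case using t1 t2 t3 by blast
  qed
  have fin: "two_node_connected (\<Union>(?G (length ps))) (?G (length ps)) \<and> \<Union>(set (take (Suc (length ps)) Ts)) \<subseteq> \<Union>(?G (length ps)) \<and> ?G (length ps) \<subseteq> Eg"
    by (rule main[OF le_refl])
  have "take (Suc (length ps)) Ts = Ts" using lenTs by simp
  then show ?thesis using fin UTs Heq by auto
qed

lemma fold_alg:
  "(fold (alg_step CYC PATH) L F0 = F0 \<or> (\<exists>ch\<in>set L. candidate CYC PATH ch = Some (fold (alg_step CYC PATH) L F0)))
   \<and> card (fold (alg_step CYC PATH) L F0) \<le> card F0
   \<and> (\<forall>ch\<in>set L. \<forall>H. candidate CYC PATH ch = Some H \<longrightarrow> card (fold (alg_step CYC PATH) L F0) \<le> card H)"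
proof (induction L arbitrary: F0)
  case Nil
  then show ?case by simp
next
  case (Cons x L)
  define F1 where "F1 = alg_step CYC PATH x F0"
  have f: "fold (alg_step CYC PATH) (x # L) F0 = fold (alg_step CYC PATH) L F1" unfolding F1_def by simp
  have F1: "(F1 = F0 \<or> candidate CYC PATH x = Some F1) \<and> card F1 \<le> card F0 \<and>
      (\<forall>H. candidate CYC PATH x = Some H \<longrightarrow> card F1 \<le> card H)"
    unfolding F1_def alg_step_def by (cases "candidate CYC PATH x") auto
  show ?case unfolding f using Cons.IH[of F1] F1 by force
qed

lemma ear_edge_out:
  assumes P: "ear F W p" and v: "v \<in> set p" "v \<notin> W" and e: "e \<in> path_edges p"
  shows "\<not> e \<subseteq> W"
proof
  assume eW: "e \<subseteq> W"
  obtain k where k: "k + 1 < length p" "e = {p ! k, p ! (k + 1)}" using e unfolding path_edges_def by blast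
  have dist: "distinct p" and ne: "p \<noteq> []" and int: "set p \<inter> W = {hd p, last p}"
    using P unfolding ear_def by auto
  let ?n = "length p"
  have hd: "hd p = p ! 0" and lst: "last p = p ! (?n - 1)" using ne by (auto simp: hd_conv_nth last_conv_nth)
  have "p ! k \<in> set p \<inter> W" using k eW by auto
  then have "p ! k = p ! 0 \<or> p ! k = p ! (?n - 1)" using int hd lst by auto
  moreover have "p ! k \<noteq> p ! (?n - 1)" using dist k(1) by (simp add: nth_eq_iff_index_eq)
  ultimately have "p ! k = p ! 0" by blast
  moreover have "0 < ?n" using ne by simp
  ultimately have k0: "k = 0" using dist k(1) by (simp add: nth_eq_iff_index_eq)
  have "p ! 1 \<in> set p \<inter> W" using k eW k0 by auto
  then have "p ! 1 = p ! 0 \<or> p ! 1 = p ! (?n - 1)" using int hd lst by auto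
  moreover have "p ! 1 \<noteq> p ! 0" using nth_eq_iff_index_eq[OF dist, of 1 0] k(1) k0 ne by simp
  ultimately have "p ! 1 = p ! (?n - 1)" by blast
  then have "1 = ?n - 1" using dist k(1) k0 by (simp add: nth_eq_iff_index_eq)
  then have n2: "?n = 2" by simp
  obtain j where j: "j < ?n" "p ! j = v" using v(1) by (meson in_set_conv_nth)
  then have "j = 0 \<or> j = 1" using n2 by auto
  then have "v \<in> e" using j k k0 by auto
  then show False using eW v(2) by blast
qed

lemma card_UN_le_lessThan:
  fixes n :: nat
  shows "card (\<Union>i<n. A i) \<le> (\<Sum>i<n. card (A i))"
  by (rule card_UN_le) simp

context hs
begin

lemma good_choice:
  assumes EsEg: "Es \<subseteq> Eg" and TV: "T \<subseteq> Vs" and VsV: "Vs \<subseteq> V" and fT: "finite T" and k3: "card T \<ge> 3"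
    and cyc: "cyc_spec Eg CYC" and path: "path_spec Eg PATH"
  shows "\<exists>ch\<in>choices V T. \<exists>H. candidate CYC PATH ch = Some H \<and> card H \<le> card Es"
proof -
  obtain t0 where t0: "t0 \<in> T" using k3 by fastforce
  obtain c where c: "is_cycle Es c" "t0 \<in> set c" using cycle_through t0 TV by blast
  have "Inv Es T c []" unfolding Inv_def using c t0 by auto
  then obtain es where I: "Inv Es T c es" and Tcov: "T \<subseteq> Wi c es (length es)"
    using build[OF TV fT] by blast
  let ?n = "length es"
  let ?W = "Wi c es"
  have ears: "\<And>i. i < ?n \<Longrightarrow> ear Es (?W i) (es ! i) \<and> (\<exists>t\<in>T. t \<in> set (es ! i) \<and> t \<notin> ?W i)"
    using I unfolding Inv_def by blast
  have cnt: "Suc ?n \<le> card (T \<inter> ?W ?n)" using Inv_count[OF I fT le_refl] .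
  have "card (T \<inter> ?W ?n) \<le> card T" using fT by (simp add: card_mono)
  then have nT: "Suc ?n \<le> card T" using cnt by linarith
  have WnV: "?W ?n \<subseteq> Vs" using Inv_sub[OF I] .
  define S where "S = hd ` set es \<union> last ` set es"
  define X where "X = T \<union> S"
  define U where "U = (\<lambda>i. if i = 0 then {} else ?W (i - 1))"
  define Ts where "Ts = map (\<lambda>i. X \<inter> (U (Suc i) - U i)) [0..<Suc ?n]"
  define ps where "ps = map (\<lambda>e. (hd e, last e)) es"
  have lenTs: "length Ts = Suc ?n" unfolding Ts_def by simp
  have Tsi: "\<And>i. i < Suc ?n \<Longrightarrow> Ts ! i = X \<inter> (U (Suc i) - U i)"
    unfolding Ts_def by (subst nth_map) (simp_all del: upt_Suc)
  have Ts0: "Ts ! 0 = X \<inter> ?W 0" using Tsi[of 0] unfolding U_def by simp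
  have TsS: "\<And>i. i < ?n \<Longrightarrow> Ts ! Suc i = X \<inter> (?W (Suc i) - ?W i)" using Tsi unfolding U_def by simp
  have Umono: "U i \<subseteq> U j" if ij: "i \<le> j" for i j
  proof (cases "i = 0")
    case True
    then show ?thesis unfolding U_def by simp
  next
    case False
    then have "j \<noteq> 0" "i - 1 \<le> j - 1" using ij by auto
    then show ?thesis unfolding U_def using False Wi_mono[of "i - 1" "j - 1" c es] by simp
  qed
  have Sin: "hd (es ! i) \<in> S \<and> last (es ! i) \<in> S \<and> hd (es ! i) \<in> ?W i \<and> last (es ! i) \<in> ?W i"
    if i: "i < ?n" for i
  proof -
    have er: "ear Es (?W i) (es ! i)" using ears[OF i] by blast
    have "es ! i \<in> set es" using i by simp
    then show ?thesis using ear_hdW[OF er] ear_lastW[OF er] unfolding S_def by blast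
  qed
  have SW: "S \<subseteq> ?W ?n"
  proof
    fix v assume "v \<in> S"
    then obtain e where e: "e \<in> set es" "v = hd e \<or> v = last e" unfolding S_def by blast
    then obtain i where i: "i < ?n" "es ! i = e" by (meson in_set_conv_nth)
    then have "v \<in> ?W i" using Sin[OF i(1)] e(2) by auto
    then show "v \<in> ?W ?n" using Wi_mono[of i ?n c es] i(1) by auto
  qed
  have XW: "X \<subseteq> ?W ?n" unfolding X_def using SW Tcov by blast
  have finX: "finite X"
  proof -
    have "finite (?W ?n)" using WnV finV by (rule finite_subset)
    then show ?thesis using XW by (rule finite_subset[rotated])
  qed
  have take_Ts: "\<Union>(set (take (Suc i) Ts)) = X \<inter> U (Suc i)" if "i \<le> ?n" for i
    using that
  proof (induction i)
    case 0
    have "take (Suc 0) Ts = [Ts ! 0]" using lenTs by (simp add: take_Suc_conv_app_nth)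
    then show ?case using Tsi[of 0] unfolding U_def by simp
  next
    case (Suc i)
    have "take (Suc (Suc i)) Ts = take (Suc i) Ts @ [Ts ! Suc i]"
      using lenTs Suc(2) by (simp add: take_Suc_conv_app_nth)
    then have "\<Union>(set (take (Suc (Suc i)) Ts)) = X \<inter> U (Suc i) \<union> X \<inter> (U (Suc (Suc i)) - U (Suc i))"
      using Suc Tsi[of "Suc i"] by (simp add: Un_commute)
    also have "\<dots> = X \<inter> U (Suc (Suc i))" using Umono[of "Suc i" "Suc (Suc i)"] by auto
    finally show ?case .
  qed
  have US: "\<And>i. U (Suc i) = ?W i" unfolding U_def by simp
  have c1: "S \<subseteq> V" using SW WnV VsV by blast
  have "card S \<le> card (hd ` set es) + card (last ` set es)" unfolding S_def by (rule card_Un_le)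
  also have "\<dots> \<le> ?n + ?n" using card_image_le[of "set es" hd] card_image_le[of "set es" last] card_length[of es] by simp
  finally have c2: "card S \<le> 2 * card T" using nT by linarith
  have c3: "1 \<le> length Ts" "length Ts \<le> card T" using lenTs nT by auto
  have c4: "\<forall>i<length Ts. Ts ! i \<noteq> {}"
  proof (intro allI impI)
    fix i assume i: "i < length Ts"
    show "Ts ! i \<noteq> {}"
    proof (cases i)
      case 0
      then show ?thesis using Ts0 c(2) t0 unfolding X_def Wi_0 by blast
    next
      case (Suc j)
      then have j: "j < ?n" using i lenTs by simp
      obtain t where "t \<in> T" "t \<in> set (es ! j)" "t \<notin> ?W j" using ears[OF j] by blast
      then have "t \<in> Ts ! Suc j" using TsS[OF j] Wi_Suc[OF j, of c] unfolding X_def by auto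
      then show ?thesis using Suc by blast
    qed
  qed
  have disj: "Ts ! i \<inter> Ts ! j = {}" if "i < j" "j < length Ts" for i j
  proof -
    have "Ts ! i \<subseteq> U (Suc i)" using Tsi[of i] that lenTs by auto
    moreover have "U (Suc i) \<subseteq> U j" using Umono that(1) by simp
    moreover have "Ts ! j \<inter> U j = {}" using Tsi[of j] that lenTs by auto
    ultimately show ?thesis by blast
  qed
  have c5: "\<forall>i<length Ts. \<forall>j<length Ts. i \<noteq> j \<longrightarrow> Ts ! i \<inter> Ts ! j = {}"
  proof (intro allI impI)
    fix i j assume "i < length Ts" "j < length Ts" "i \<noteq> j"
    then show "Ts ! i \<inter> Ts ! j = {}"
      using disj[of i j] disj[of j i] by (cases "i < j") (auto simp: Int_commute)
  qed
  have "\<Union>(set Ts) = \<Union>(set (take (Suc ?n) Ts))" using lenTs by simp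
  also have "\<dots> = X \<inter> ?W ?n" using take_Ts[of ?n] US by simp
  also have "\<dots> = T \<union> S" using XW unfolding X_def by blast
  finally have c6: "\<Union>(set Ts) = T \<union> S" .
  have c7: "card (Ts ! 0) \<ge> 2"
  proof (cases "?n = 0")
    case True
    then have "T \<subseteq> Ts ! 0" using Tcov Ts0 unfolding X_def by auto
    moreover have "finite (Ts ! 0)" using Ts0 finX by simp
    ultimately have "card T \<le> card (Ts ! 0)" by (rule card_mono[rotated])
    then show ?thesis using k3 by linarith
  next
    case False
    then have z: "0 < ?n" by simp
    have "hd (es ! 0) \<noteq> last (es ! 0)" using ear_hd_last ears[OF z] by blast
    moreover have "{hd (es ! 0), last (es ! 0)} \<subseteq> Ts ! 0" using Sin[OF z] Ts0 unfolding X_def by auto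
    moreover have "finite (Ts ! 0)" using Ts0 finX by simp
    ultimately have "card {hd (es ! 0), last (es ! 0)} \<le> card (Ts ! 0)" by (meson card_mono)
    moreover have "card {hd (es ! 0), last (es ! 0)} = 2" using \<open>hd (es ! 0) \<noteq> last (es ! 0)\<close> by simp
    ultimately show ?thesis by linarith
  qed
  have c8: "length ps = length Ts - 1" unfolding ps_def using lenTs by simp
  have c9: "\<forall>i<length ps. fst (ps ! i) \<noteq> snd (ps ! i) \<and>
          fst (ps ! i) \<in> \<Union>(set (take (i + 1) Ts)) \<and>
          snd (ps ! i) \<in> \<Union>(set (take (i + 1) Ts))"
  proof (intro allI impI)
    fix i assume "i < length ps"
    then have i: "i < ?n" unfolding ps_def by simp
    have tk: "\<Union>(set (take (i + 1) Ts)) = X \<inter> ?W i" using take_Ts[of i] i US by simp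
    have "hd (es ! i) \<noteq> last (es ! i)" using ear_hd_last ears[OF i] by blast
    then show "fst (ps ! i) \<noteq> snd (ps ! i) \<and>
          fst (ps ! i) \<in> \<Union>(set (take (i + 1) Ts)) \<and>
          snd (ps ! i) \<in> \<Union>(set (take (i + 1) Ts))"
      unfolding tk ps_def using i Sin[OF i] unfolding X_def by simp
  qed
  have chin: "(S, Ts, ps) \<in> choices V T"
    unfolding choices_def using c1 c2 c3 c4 c5 c6 c7 c8 c9 by simp
  have cycEg: "is_cycle Eg c" using c(1) EsEg unfolding is_cycle_def by blast
  have Ts0c: "Ts ! 0 \<subseteq> set c" using Ts0 unfolding Wi_0 by blast
  obtain C where C: "CYC (Ts ! 0) = Some C" "card C \<le> card (cycle_edges c)"
  proof -
    have "CYC (Ts ! 0) \<noteq> None" using cyc cycEg Ts0c unfolding cyc_spec_def by blast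
    then obtain C where C: "CYC (Ts ! 0) = Some C" by blast
    then have "card C \<le> card (cycle_edges c)" using cyc cycEg Ts0c unfolding cyc_spec_def by blast
    then show ?thesis using that C by blast
  qed
  have pathi: "is_path Eg (es ! i) (hd (es ! i)) (last (es ! i))" if i: "i < ?n" for i
  proof -
    have "ear Es (?W i) (es ! i)" using ears[OF i] by blast
    then have "wk Eg (es ! i)" "distinct (es ! i)" "es ! i \<noteq> []" using wk_mono[OF EsEg]
      unfolding ear_def by auto
    then show ?thesis unfolding is_path_iff by simp
  qed
  have Tsub: "Ts ! (i + 1) \<subseteq> set (es ! i)" if i: "i < ?n" for i
    using TsS[OF i] Wi_Suc[OF i, of c] by auto
  have psi: "\<And>i. i < ?n \<Longrightarrow> fst (ps ! i) = hd (es ! i) \<and> snd (ps ! i) = last (es ! i)"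
    unfolding ps_def by simp
  have lenps: "length ps = ?n" unfolding ps_def by simp
  have Pex: "PATH (Ts ! (i + 1)) (fst (ps ! i)) (snd (ps ! i)) \<noteq> None \<and>
      card (the (PATH (Ts ! (i + 1)) (fst (ps ! i)) (snd (ps ! i)))) \<le> card (path_edges (es ! i))"
    if i: "i < ?n" for i
  proof -
    have pth: "is_path Eg (es ! i) (fst (ps ! i)) (snd (ps ! i))" using pathi[OF i] psi[OF i] by simp
    have ne: "PATH (Ts ! (i + 1)) (fst (ps ! i)) (snd (ps ! i)) \<noteq> None"
      using path pth Tsub[OF i] unfolding path_spec_def by blast
    then obtain P where P: "PATH (Ts ! (i + 1)) (fst (ps ! i)) (snd (ps ! i)) = Some P" by blast
    then have "card P \<le> card (path_edges (es ! i))" using path pth Tsub[OF i] unfolding path_spec_def by blast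
    then show ?thesis using P by simp
  qed
  let ?Pth = "\<lambda>i. the (PATH (Ts ! (i + 1)) (fst (ps ! i)) (snd (ps ! i)))"
  define H where "H = C \<union> \<Union>{?Pth i | i. i < length ps}"
  have cand: "candidate CYC PATH (S, Ts, ps) = Some H"
    unfolding candidate_def H_def using C(1) Pex lenps by simp
  let ?A = "\<lambda>m. cycle_edges c \<union> (\<Union>i<m. path_edges (es ! i))"
  have Acount: "card (?A m) = card (cycle_edges c) + (\<Sum>i<m. card (path_edges (es ! i))) \<and> (\<forall>e\<in>?A m. e \<subseteq> ?W m) \<and> ?A m \<subseteq> Es"
    if "m \<le> ?n" for m
    using that
  proof (induction m)
    case 0
    have "\<forall>e\<in>cycle_edges c. e \<subseteq> set c"
      using cycle_edges_Union[OF c(1)] by blast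
    then show ?case using cycle_edges_sub[OF c(1)] unfolding Wi_0 by simp
  next
    case (Suc m)
    then have m: "m < ?n" by simp
    have IH: "card (?A m) = card (cycle_edges c) + (\<Sum>i<m. card (path_edges (es ! i)))"
      "\<forall>e\<in>?A m. e \<subseteq> ?W m" "?A m \<subseteq> Es" using Suc by auto
    have Aeq: "?A (Suc m) = ?A m \<union> path_edges (es ! m)" by (auto simp: lessThan_Suc)
    obtain t where t: "t \<in> set (es ! m)" "t \<notin> ?W m" using ears[OF m] by blast
    have er: "ear Es (?W m) (es ! m)" using ears[OF m] by blast
    have dj: "?A m \<inter> path_edges (es ! m) = {}"
      using IH(2) ear_edge_out[OF er t] by blast
    have finA: "finite (?A m)" using cycle_edges_finite path_edges_finite by auto
    have "card (?A (Suc m)) = card (?A m) + card (path_edges (es ! m))"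
      unfolding Aeq by (rule card_Un_disjoint[OF finA path_edges_finite dj])
    then have t1: "card (?A (Suc m)) = card (cycle_edges c) + (\<Sum>i<Suc m. card (path_edges (es ! i)))"
      using IH(1) by simp
    have "\<forall>e\<in>path_edges (es ! m). e \<subseteq> set (es ! m)" unfolding path_edges_def by auto
    then have t2: "\<forall>e\<in>?A (Suc m). e \<subseteq> ?W (Suc m)"
      using IH(2) Wi_Suc[OF m, of c] unfolding Aeq by blast
    have "wk Es (es ! m)" using er unfolding ear_def by blast
    then have t3: "?A (Suc m) \<subseteq> Es" using IH(3) path_edges_sub unfolding Aeq by blast
    show ?case using t1 t2 t3 by blast
  qed
  have finEs: "finite Es"
  proof -
    have "finite (\<Union>Es)" using sub finV by (rule finite_subset)
    then show ?thesis by (rule finite_UnionD)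
  qed
  have An: "card (?A ?n) = card (cycle_edges c) + (\<Sum>i<?n. card (path_edges (es ! i)))" "?A ?n \<subseteq> Es"
    using Acount[OF le_refl] by auto
  have "card H \<le> card C + card (\<Union>{?Pth i | i. i < length ps})" unfolding H_def by (rule card_Un_le)
  also have "card (\<Union>{?Pth i | i. i < length ps}) \<le> (\<Sum>i<?n. card (?Pth i))"
    unfolding Union_setbuilder lenps by (rule card_UN_le_lessThan)
  also have "(\<Sum>i<?n. card (?Pth i)) \<le> (\<Sum>i<?n. card (path_edges (es ! i)))"
    by (rule sum_mono) (use Pex in auto)
  also have "card C + (\<Sum>i<?n. card (path_edges (es ! i))) \<le> card (?A ?n)" using An(1) C(2) by linarith
  also have "\<dots> \<le> card Es" using An(2) finEs by (rule card_mono[rotated])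
  finally have "card H \<le> card Es" by simp
  then show ?thesis using chin cand by blast
qed

end

theorem lemma4p3:
  fixes V :: "'a set" and Eg :: "'a set set" and T :: "'a set"
    and CYC :: "'a set \<Rightarrow> 'a set set option"
    and PATH :: "'a set \<Rightarrow> 'a \<Rightarrow> 'a \<Rightarrow> 'a set set option"
    and order :: "('a set \<times> 'a set list \<times> ('a \<times> 'a) list) list"
    and Vs :: "'a set" and Es :: "'a set set"
  assumes G: "graph V Eg"
    and TV: "T \<subseteq> V" and k3: "card T \<ge> 3"
    and opt_sub: "subgraph Vs Es V Eg" and opt_2nc: "two_node_connected Vs Es" and opt_T: "T \<subseteq> Vs"
    and opt_min: "\<And>U F. subgraph U F V Eg \<Longrightarrow> two_node_connected U F \<Longrightarrow> T \<subseteq> U \<Longrightarrow> card Es \<le> card F"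
    and cyc: "cyc_spec Eg CYC" and path: "path_spec Eg PATH"
    and ord: "set order = choices V T"
  shows "two_node_connected (\<Union>(alg_output Eg CYC PATH order)) (alg_output Eg CYC PATH order)
       \<and> T \<subseteq> \<Union>(alg_output Eg CYC PATH order)
       \<and> card (alg_output Eg CYC PATH order) \<le> card Es"
proof -
  have sub: "\<Union>Es \<subseteq> Vs" using opt_sub unfolding subgraph_def by blast
  have EsEg: "Es \<subseteq> Eg" using opt_sub unfolding subgraph_def by blast
  have VsV: "Vs \<subseteq> V" using opt_sub unfolding subgraph_def by blast
  have c2: "\<forall>e\<in>Es. card e = 2" using EsEg G unfolding graph_def by blast
  have finV: "finite V" using G unfolding graph_def by blast
  have EgP: "Eg \<subseteq> Pow V" using G unfolding graph_def by blast
  have finEg: "finite Eg" using finite_subset[OF EgP] finV by simp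
  have fT: "finite T" using finite_subset[OF TV finV] .
  interpret h: hs Vs Es by (rule hs.intro[OF opt_2nc sub c2])
  obtain ch0 H0 where ch0: "ch0 \<in> choices V T" "candidate CYC PATH ch0 = Some H0" "card H0 \<le> card Es"
    using h.good_choice[OF EsEg opt_T VsV fT k3 cyc path] by blast
  define R where "R = alg_output Eg CYC PATH order"
  have F: "(R = Eg \<or> (\<exists>ch\<in>set order. candidate CYC PATH ch = Some R))
   \<and> card R \<le> card Eg
   \<and> (\<forall>ch\<in>set order. \<forall>H. candidate CYC PATH ch = Some H \<longrightarrow> card R \<le> card H)"
    unfolding R_def alg_output_def by (rule fold_alg)
  have ch0o: "ch0 \<in> set order" using ch0(1) ord by simp
  have RH0: "card R \<le> card H0" using F ch0o ch0(2) by blast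
  have good: "two_node_connected (\<Union>H) H \<and> T \<subseteq> \<Union>H \<and> H \<subseteq> Eg"
    if "ch \<in> choices V T" "candidate CYC PATH ch = Some H" for ch H
  proof -
    obtain S Ts ps where "ch = (S, Ts, ps)" by (cases ch)
    then show ?thesis using candidate_good[OF cyc path, of S Ts ps V T H] that by simp
  qed
  obtain ch where ch: "ch \<in> choices V T" "candidate CYC PATH ch = Some R"
  proof (cases "R = Eg")
    case True
    have "H0 \<subseteq> Eg" using good[OF ch0(1,2)] by blast
    moreover have "card Eg \<le> card H0" using RH0 True by simp
    ultimately have "H0 = Eg" using finEg by (meson card_seteq)
    then show ?thesis using that ch0 True by simp
  next
    case False
    then obtain ch where "ch \<in> set order" "candidate CYC PATH ch = Some R" using F by blast
    then show ?thesis using that ord by blast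
  qed
  have "two_node_connected (\<Union>R) R \<and> T \<subseteq> \<Union>R" using good[OF ch] by blast
  moreover have "card R \<le> card Es" using RH0 ch0(3) by linarith
  ultimately show ?thesis unfolding R_def by blast
qed

end
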